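(* Let $\phi\in\mathrm{Diff}(\mathbb C^2,0)$ with $\phi(\xi)=\Lambda\xi+\mathrm{h.o.t.}$ ($\Lambda=\mathrm{diag}(\lambda,\lambda^{-1})$ or $\Lambda=-\sigma$), such that $\phi^{\circ p}=\exp(\hat{\bm X})$ is tangent to the identity, $\phi$ is reversed by $\sigma$ (i.e. $\sigma\circ\phi\circ\sigma=\phi^{\circ(-1)}$) and has the first integral $h=\xi_1\xi_2$. Let $f:=\frac{\xi_1\circ\phi^{\circ p}-\xi_1}{\xi_1}$ and let $s\in\mathbb Z_{\geq0}$ be maximal such that $h^s$ divides $f$. Then $$\hat{\bm X}=\frac{f\log(1+\bm E.f)}{\bm E.f}\,\bm E\mod h^{-s}f^2\bm E.$$
   Context: $\sigma(\xi)=(\xi_2,\xi_1)$, $\bm E=\xi_1\frac{\partial}{\partial\xi_1}-\xi_2\frac{\partial}{\partial\xi_2}$, $\bm E.f$ is the derivative of $f$ along $\bm E$. $\hat{\bm X}$ is the formal infinitesimal generator of $\phi^{\circ p}$: the unique formal vector field with vanishing linear part whose formal time-1 flow $\exp(\hat{\bm X})$ equals the Taylor series of $\phi^{\circ p}$. $\frac{f\log(1+\bm E.f)}{\bm E.f}$ denotes the formal series $f\sum_{n\geq1}\frac{(-1)^{n-1}}{n}(\bm E.f)^{n-1}$. "mod $h^{-s}f^2\bm E$" means the difference is $g\,h^{-s}f^2\bm E$ for some formal series $g$. *)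

theory Defs
  imports "HOL-Analysis.Analysis"
begin

text \<open>A formal power series in \<xi>1, \<xi>2 is represented by its coefficient function:
  a (i,j) is the coefficient of \<xi>1^i \<xi>2^j.\<close>

type_synonym ps2 = "nat \<times> nat \<Rightarrow> complex"

definition ps_const :: "complex \<Rightarrow> ps2" where
  "ps_const c = (\<lambda>(i,j). if i = 0 \<and> j = 0 then c else 0)"

definition ps_X1 :: ps2 where
  "ps_X1 = (\<lambda>(i,j). if i = 1 \<and> j = 0 then 1 else 0)"

definition ps_X2 :: ps2 where
  "ps_X2 = (\<lambda>(i,j). if i = 0 \<and> j = 1 then 1 else 0)"

definition ps_add :: "ps2 \<Rightarrow> ps2 \<Rightarrow> ps2" where
  "ps_add a b = (\<lambda>k. a k + b k)"

definition ps_sub :: "ps2 \<Rightarrow> ps2 \<Rightarrow> ps2" where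
  "ps_sub a b = (\<lambda>k. a k - b k)"

definition ps_scale :: "complex \<Rightarrow> ps2 \<Rightarrow> ps2" where
  "ps_scale c a = (\<lambda>k. c * a k)"

definition ps_mul :: "ps2 \<Rightarrow> ps2 \<Rightarrow> ps2" where
  "ps_mul a b = (\<lambda>(i,j). \<Sum>i'\<le>i. \<Sum>j'\<le>j. a (i',j') * b (i - i', j - j'))"

fun ps_pow :: "ps2 \<Rightarrow> nat \<Rightarrow> ps2" where
  "ps_pow a 0 = ps_const 1"
| "ps_pow a (Suc n) = ps_mul a (ps_pow a n)"

definition ps_dvd :: "ps2 \<Rightarrow> ps2 \<Rightarrow> bool" where
  "ps_dvd a b \<longleftrightarrow> (\<exists>c. b = ps_mul a c)"

definition ps_d1 :: "ps2 \<Rightarrow> ps2" where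
  "ps_d1 a = (\<lambda>(i,j). of_nat (i+1) * a (i+1, j))"

definition ps_d2 :: "ps2 \<Rightarrow> ps2" where
  "ps_d2 a = (\<lambda>(i,j). of_nat (j+1) * a (i, j+1))"

definition ps_fsum :: "(nat \<Rightarrow> ps2) \<Rightarrow> ps2" where
  "ps_fsum S = (\<lambda>k. \<Sum>n. S n k)"

text \<open>Substitution g(u,v) for series u, v without constant term.\<close>
definition ps_comp :: "ps2 \<Rightarrow> ps2 \<Rightarrow> ps2 \<Rightarrow> ps2" where
  "ps_comp g u v = (\<lambda>k. \<Sum>i. \<Sum>j. g (i,j) * ps_mul (ps_pow u i) (ps_pow v j) k)"

text \<open>Convergence (the series defines a holomorphic germ at 0).\<close>
definition ps_convergent :: "ps2 \<Rightarrow> bool" where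
  "ps_convergent a \<longleftrightarrow>
     (\<exists>r>0. (\<lambda>(i,j). norm (a (i,j)) * r ^ (i + j)) summable_on (UNIV :: (nat \<times> nat) set))"

type_synonym map2 = "ps2 \<times> ps2"

definition map_id :: map2 where
  "map_id = (ps_X1, ps_X2)"

definition map_comp :: "map2 \<Rightarrow> map2 \<Rightarrow> map2" where
  "map_comp F G = (ps_comp (fst F) (fst G) (snd G), ps_comp (snd F) (fst G) (snd G))"

fun map_iter :: "map2 \<Rightarrow> nat \<Rightarrow> map2" where
  "map_iter F 0 = map_id"
| "map_iter F (Suc n) = map_comp F (map_iter F n)"

definition sigma :: map2 where
  "sigma = (ps_X2, ps_X1)"

definition has_linear_part :: "map2 \<Rightarrow> complex \<Rightarrow> complex \<Rightarrow> complex \<Rightarrow> complex \<Rightarrow> bool" where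
  "has_linear_part F a b c d \<longleftrightarrow>
     fst F (0,0) = 0 \<and> snd F (0,0) = 0 \<and>
     fst F (1,0) = a \<and> fst F (0,1) = b \<and> snd F (1,0) = c \<and> snd F (0,1) = d"

definition tangent_to_id :: "map2 \<Rightarrow> bool" where
  "tangent_to_id F \<longleftrightarrow> has_linear_part F 1 0 0 1"

text \<open>A formal vector field X = (a,b) stands for a \<partial>/\<partial>\<xi>1 + b \<partial>/\<partial>\<xi>2.\<close>
type_synonym vf2 = "ps2 \<times> ps2"

definition vf_apply :: "vf2 \<Rightarrow> ps2 \<Rightarrow> ps2" where
  "vf_apply X g = ps_add (ps_mul (fst X) (ps_d1 g)) (ps_mul (snd X) (ps_d2 g))"

fun vf_apply_iter :: "vf2 \<Rightarrow> nat \<Rightarrow> ps2 \<Rightarrow> ps2" where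
  "vf_apply_iter X 0 g = g"
| "vf_apply_iter X (Suc n) g = vf_apply X (vf_apply_iter X n g)"

definition vf_exp :: "vf2 \<Rightarrow> map2" where
  "vf_exp X = (ps_fsum (\<lambda>n. ps_scale (1 / of_nat (fact n)) (vf_apply_iter X n ps_X1)),
               ps_fsum (\<lambda>n. ps_scale (1 / of_nat (fact n)) (vf_apply_iter X n ps_X2)))"

definition vf_order_ge2 :: "vf2 \<Rightarrow> bool" where
  "vf_order_ge2 X \<longleftrightarrow> (\<forall>i j. i + j \<le> 1 \<longrightarrow> fst X (i,j) = 0 \<and> snd X (i,j) = 0)"

definition vf_E :: vf2 where
  "vf_E = (ps_X1, ps_scale (-1) ps_X2)"

definition ps_h :: ps2 where
  "ps_h = ps_mul ps_X1 ps_X2"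

text \<open>f log(1 + E.f) / E.f := f \<Sum>_{n\<ge>1} (-1)^(n-1)/n (E.f)^(n-1).\<close>
definition log_coeff :: "ps2 \<Rightarrow> ps2" where
  "log_coeff f = ps_mul f
     (ps_fsum (\<lambda>n. ps_scale ((-1) ^ n / of_nat (n + 1)) (ps_pow (vf_apply vf_E f) n)))"

definition vf_scale :: "ps2 \<Rightarrow> vf2 \<Rightarrow> vf2" where
  "vf_scale g X = (ps_mul g (fst X), ps_mul g (snd X))"

definition vf_sub :: "vf2 \<Rightarrow> vf2 \<Rightarrow> vf2" where
  "vf_sub X Y = (ps_sub (fst X) (fst Y), ps_sub (snd X) (snd Y))"

end

theory Submission
  imports Defs "HOL-Computational_Algebra.Formal_Power_Series"
begin

unbundle no vec_syntax
notation fps_nth (infixl "$" 75)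

type_synonym R = "complex fps fps"

definition lo :: "nat \<Rightarrow> R \<Rightarrow> bool" where
  "lo n F \<longleftrightarrow> (\<forall>i j. i + j < n \<longrightarrow> F $ i $ j = 0)"

lemma mult2_nth: "(F * G :: R) $ i $ j = (\<Sum>k=0..i. \<Sum>l=0..j. F$k$l * G$(i-k)$(j-l))"
  by (simp add: fps_mult_nth fps_sum_nth)

lemma lo_0[simp]: "lo 0 F" by (simp add: lo_def)
lemma lo_zero[simp]: "lo n 0" by (simp add: lo_def)
lemma lo_mono: "lo n F \<Longrightarrow> m \<le> n \<Longrightarrow> lo m F" by (auto simp: lo_def)
lemma lo_add: "lo n F \<Longrightarrow> lo n G \<Longrightarrow> lo n (F + G)" by (simp add: lo_def)
lemma lo_diff: "lo n F \<Longrightarrow> lo n G \<Longrightarrow> lo n (F - G)" by (simp add: lo_def)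
lemma lo_uminus: "lo n F \<Longrightarrow> lo n (- F)" by (simp add: lo_def)
lemma lo_sum: "(\<And>k. k \<in> S \<Longrightarrow> lo n (f k)) \<Longrightarrow> lo n (sum f S)"
  by (induct S rule: infinite_finite_induct) (auto intro: lo_add)

lemma lo_mult: assumes "lo m F" "lo n G" shows "lo (m+n) (F*G)"
  unfolding lo_def
proof (intro allI impI)
  fix i j assume ij: "i + j < m + n"
  have "\<And>k l. k \<in> {0..i} \<Longrightarrow> l \<in> {0..j} \<Longrightarrow> F $ k $ l * G $ (i - k) $ (j - l) = 0"
  proof -
    fix k l assume *: "k \<in> {0..i}" "l \<in> {0..j}"
    show "F $ k $ l * G $ (i - k) $ (j - l) = 0"
    proof (cases "k + l < m")
      case True then show ?thesis using assms(1) by (simp add: lo_def)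
    next
      case False then have "(i-k) + (j-l) < n" using * ij by auto
      then show ?thesis using assms(2) by (simp add: lo_def)
    qed
  qed
  then show "(F * G) $ i $ j = 0" unfolding mult2_nth by (intro sum.neutral ballI) auto
qed

lemma lo_mult_left: "lo n G \<Longrightarrow> lo n (F*G)" using lo_mult[of 0 F n G] by simp
lemma lo_mult_right: "lo n F \<Longrightarrow> lo n (F*G)" using lo_mult[of n F 0 G] by simp
lemma lo_power: "lo m F \<Longrightarrow> lo (m*k) (F^k)"
  by (induct k) (auto dest: lo_mult[of m F])
lemma lo_power1: "lo 1 F \<Longrightarrow> lo k (F^k)" using lo_power[of 1 F k] by simp

lemma lo_eq: assumes "\<And>N. lo N (A - B)" shows "A = B"
proof (rule fps_ext)
  fix i show "A $ i = B $ i"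
  proof (rule fps_ext)
    fix j have "lo (i+j+1) (A - B)" by (rule assms)
    then show "A $ i $ j = B $ i $ j" by (simp add: lo_def)
  qed
qed

definition fsR :: "(nat \<Rightarrow> R) \<Rightarrow> R" where
  "fsR T = Abs_fps (\<lambda>i. Abs_fps (\<lambda>j. \<Sum>n. T n $ i $ j))"

lemma fsR_nth: "fsR T $ i $ j = (\<Sum>n. T n $ i $ j)" by (simp add: fsR_def)

lemma FS0: assumes "\<And>n. n \<ge> M \<Longrightarrow> lo N (T n)" shows "lo N (fsR T - sum T {..<M})"
  unfolding lo_def
proof (intro allI impI)
  fix i j assume ij: "i + j < N"
  have "(\<Sum>n. T n $ i $ j) = (\<Sum>n<M. T n $ i $ j)"
    by (rule suminf_finite) (use assms ij in \<open>auto simp: lo_def\<close>)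
  then show "(fsR T - sum T {..<M}) $ i $ j = 0" by (simp add: fsR_nth fps_sum_nth)
qed

definition EV :: "(nat \<Rightarrow> R) \<Rightarrow> bool" where
  "EV T \<longleftrightarrow> (\<forall>N. \<exists>M. \<forall>n\<ge>M. lo N (T n))"

lemma EV_lo: assumes "\<And>n. lo (n - c) (T n)" shows "EV T"
  unfolding EV_def
proof
  fix N show "\<exists>M. \<forall>n\<ge>M. lo N (T n)"
    by (rule exI[of _ "N + c"]) (auto intro: lo_mono[OF assms])
qed

lemma EV_lo0: "(\<And>n. lo n (T n)) \<Longrightarrow> EV T" using EV_lo[of 0 T] by simp

lemma fs_approx: assumes "EV T" shows "\<exists>M. \<forall>M'\<ge>M. lo N (fsR T - sum T {..<M'})"
proof -
  obtain M where "\<forall>n\<ge>M. lo N (T n)" using assms unfolding EV_def by blast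
  then show ?thesis by (intro exI[of _ M]) (auto intro!: FS0)
qed

lemma fs_char: assumes "EV T" and "\<And>N. \<exists>M. \<forall>M'\<ge>M. lo N (Z - sum T {..<M'})"
  shows "fsR T = Z"
proof (rule lo_eq)
  fix N
  obtain M1 where M1: "\<forall>M'\<ge>M1. lo N (fsR T - sum T {..<M'})" using fs_approx[OF assms(1)] by blast
  obtain M2 where M2: "\<forall>M'\<ge>M2. lo N (Z - sum T {..<M'})" using assms(2) by blast
  let ?M = "max M1 M2"
  have "fsR T - Z = (fsR T - sum T {..<?M}) - (Z - sum T {..<?M})" by simp
  then show "lo N (fsR T - Z)" using M1 M2 by (metis lo_diff max.cobounded1 max.cobounded2)
qed

lemma EV_add: "EV S \<Longrightarrow> EV T \<Longrightarrow> EV (\<lambda>n. S n + T n)"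
  unfolding EV_def by (metis lo_add nat_le_linear le_trans)
lemma EV_diff: "EV S \<Longrightarrow> EV T \<Longrightarrow> EV (\<lambda>n. S n - T n)"
  unfolding EV_def by (metis lo_diff nat_le_linear le_trans)
lemma EV_mult: "EV T \<Longrightarrow> EV (\<lambda>n. C * T n)"
  unfolding EV_def by (metis lo_mult_left)

lemma fs_add: assumes "EV S" "EV T" shows "fsR (\<lambda>n. S n + T n) = fsR S + fsR T"
proof (rule fs_char[OF EV_add[OF assms]])
  fix N
  obtain M1 where M1: "\<forall>M'\<ge>M1. lo N (fsR S - sum S {..<M'})" using fs_approx[OF assms(1)] by blast
  obtain M2 where M2: "\<forall>M'\<ge>M2. lo N (fsR T - sum T {..<M'})" using fs_approx[OF assms(2)] by blast
  show "\<exists>M. \<forall>M'\<ge>M. lo N (fsR S + fsR T - (\<Sum>n<M'. S n + T n))"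
  proof (intro exI[of _ "max M1 M2"] allI impI)
    fix M' assume "max M1 M2 \<le> M'"
    then have "lo N ((fsR S - sum S {..<M'}) + (fsR T - sum T {..<M'}))" using M1 M2 by (auto intro: lo_add)
    then show "lo N (fsR S + fsR T - (\<Sum>n<M'. S n + T n))" by (simp add: sum.distrib algebra_simps)
  qed
qed

lemma fs_diff: assumes "EV S" "EV T" shows "fsR (\<lambda>n. S n - T n) = fsR S - fsR T"
proof (rule fs_char[OF EV_diff[OF assms]])
  fix N
  obtain M1 where M1: "\<forall>M'\<ge>M1. lo N (fsR S - sum S {..<M'})" using fs_approx[OF assms(1)] by blast
  obtain M2 where M2: "\<forall>M'\<ge>M2. lo N (fsR T - sum T {..<M'})" using fs_approx[OF assms(2)] by blast
  show "\<exists>M. \<forall>M'\<ge>M. lo N (fsR S - fsR T - (\<Sum>n<M'. S n - T n))"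
  proof (intro exI[of _ "max M1 M2"] allI impI)
    fix M' assume "max M1 M2 \<le> M'"
    then have "lo N ((fsR S - sum S {..<M'}) - (fsR T - sum T {..<M'}))" using M1 M2 by (auto intro: lo_diff)
    then show "lo N (fsR S - fsR T - (\<Sum>n<M'. S n - T n))" by (simp add: sum_subtractf algebra_simps)
  qed
qed

lemma fs_mult_left: assumes "EV T" shows "fsR (\<lambda>n. C * T n) = C * fsR T"
proof (rule fs_char[OF EV_mult[OF assms]])
  fix N
  obtain M1 where M1: "\<forall>M'\<ge>M1. lo N (fsR T - sum T {..<M'})" using fs_approx[OF assms(1)] by blast
  show "\<exists>M. \<forall>M'\<ge>M. lo N (C * fsR T - (\<Sum>n<M'. C * T n))"
  proof (intro exI[of _ M1] allI impI)
    fix M' assume "M1 \<le> M'"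
    then have "lo N (C * (fsR T - sum T {..<M'}))" using M1 by (auto intro: lo_mult_left)
    then show "lo N (C * fsR T - (\<Sum>n<M'. C * T n))" by (simp add: sum_distrib_left algebra_simps)
  qed
qed

lemma EV_shift: "EV T \<Longrightarrow> EV (\<lambda>n. T (Suc n))"
  unfolding EV_def by (meson le_SucI)

lemma fs_shift: assumes "EV T" shows "fsR T = T 0 + fsR (\<lambda>n. T (Suc n))"
proof -
  have "fsR (\<lambda>n. T (Suc n)) = fsR T - T 0"
  proof (rule fs_char[OF EV_shift[OF assms]])
    fix N
    obtain M1 where M1: "\<forall>M'\<ge>M1. lo N (fsR T - sum T {..<M'})" using fs_approx[OF assms(1)] by blast
    show "\<exists>M. \<forall>M'\<ge>M. lo N (fsR T - T 0 - (\<Sum>n<M'. T (Suc n)))"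
    proof (intro exI[of _ M1] allI impI)
      fix M' assume "M1 \<le> M'"
      then have "lo N (fsR T - sum T {..<Suc M'})" using M1 le_SucI by blast
      moreover have "sum T {..<Suc M'} = T 0 + (\<Sum>n<M'. T (Suc n))" by (rule sum.lessThan_Suc_shift)
      ultimately show "lo N (fsR T - T 0 - (\<Sum>n<M'. T (Suc n)))" by (simp add: algebra_simps)
    qed
  qed
  then show ?thesis by simp
qed

lemma fs_single: "fsR (\<lambda>n. if n = m then A else 0) = A"
proof (rule fs_char)
  show "EV (\<lambda>n. if n = m then A else 0)" unfolding EV_def
    by (intro allI exI[of _ "Suc m"]) auto
  fix N show "\<exists>M. \<forall>M'\<ge>M. lo N (A - (\<Sum>n<M'. if n = m then A else 0))"
    by (intro exI[of _ "Suc m"]) (auto simp: sum.delta)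
qed

lemma fs_lo: assumes "EV T" "\<And>n. lo N (T n)" shows "lo N (fsR T)"
proof -
  obtain M where "\<forall>M'\<ge>M. lo N (fsR T - sum T {..<M'})" using fs_approx[OF assms(1)] by blast
  then have "lo N (fsR T - sum T {..<M})" by simp
  moreover have "lo N (sum T {..<M})" by (rule lo_sum) (use assms in auto)
  ultimately have "lo N ((fsR T - sum T {..<M}) + sum T {..<M})" by (rule lo_add)
  then show ?thesis by simp
qed

lemma ring3: "(a::'a::comm_ring) * b - c = (a - A) * b + A * (b - B) + (A * B - c)"
  by (simp add: algebra_simps)

lemma finite_cauchy:
  assumes S: "\<And>n. lo n (S n)" and T: "\<And>n. lo n (T n)" and NM: "N \<le> M"
  shows "lo N (sum S {..<M} * sum T {..<M} - (\<Sum>n<M. \<Sum>k\<le>n. S k * T (n - k)))"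
proof -
  let ?g = "\<lambda>k l. S k * T l"
  have sq: "sum S {..<M} * sum T {..<M} = sum (\<lambda>(k,l). ?g k l) ({..<M} \<times> {..<M})"
    unfolding sum_product by (rule sum.cartesian_product)
  have tr: "(\<Sum>n<M. \<Sum>k\<le>n. S k * T (n - k)) = sum (\<lambda>(k,l). ?g k l) {(k,l). k + l < M}"
    by (rule sum.triangle_reindex[symmetric])
  have sub: "{(k,l). k + l < M} \<subseteq> {..<M} \<times> {..<M}" by auto
  have fin: "finite ({..<M} \<times> {..<M})" by simp
  have e: "sum (\<lambda>(k,l). ?g k l) ({..<M} \<times> {..<M}) =
        sum (\<lambda>(k,l). ?g k l) ({..<M} \<times> {..<M} - {(k,l). k + l < M}) + sum (\<lambda>(k,l). ?g k l) {(k,l). k + l < M}"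
    by (rule sum.subset_diff[OF sub fin])
  have l: "lo N (sum (\<lambda>(k,l). ?g k l) ({..<M} \<times> {..<M} - {(k,l). k + l < M}))"
  proof (rule lo_sum)
    fix x assume x: "x \<in> {..<M} \<times> {..<M} - {(k,l). k + l < M}"
    obtain k l where kl: "x = (k,l)" by (cases x)
    have "lo (k + l) (S k * T l)" using lo_mult[OF S T] .
    moreover have "N \<le> k + l" using x kl NM by auto
    ultimately show "lo N ((\<lambda>(k,l). ?g k l) x)" using kl by (auto intro: lo_mono)
  qed
  have d: "sum S {..<M} * sum T {..<M} - (\<Sum>n<M. \<Sum>k\<le>n. S k * T (n - k)) =
     sum (\<lambda>(k,l). ?g k l) ({..<M} \<times> {..<M} - {(k,l). k + l < M})"
    unfolding sq tr e by (rule add_diff_cancel_right')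
  show ?thesis unfolding d by (rule l)
qed

lemma fs_cauchy:
  assumes S: "\<And>n. lo n (S n)" and T: "\<And>n. lo n (T n)"
  shows "fsR S * fsR T = fsR (\<lambda>n. \<Sum>k\<le>n. S k * T (n - k))"
proof (rule sym, rule fs_char)
  show "EV (\<lambda>n. \<Sum>k\<le>n. S k * T (n - k))"
  proof (rule EV_lo0, rule lo_sum)
    fix n k :: nat assume "k \<in> {..n}"
    then show "lo n (S k * T (n - k))" using lo_mult[OF S T, of k "n-k"] by simp
  qed
  fix N
  show "\<exists>M. \<forall>M'\<ge>M. lo N (fsR S * fsR T - (\<Sum>n<M'. \<Sum>k\<le>n. S k * T (n - k)))"
  proof (intro exI[of _ N] allI impI)
    fix M' assume NM: "N \<le> M'"
    let ?A = "sum S {..<M'}" and ?B = "sum T {..<M'}"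
    have a: "lo N (fsR S - ?A)" by (rule FS0) (use S NM in \<open>auto intro: lo_mono\<close>)
    have b: "lo N (fsR T - ?B)" by (rule FS0) (use T NM in \<open>auto intro: lo_mono\<close>)
    have c: "lo N (?A * ?B - (\<Sum>n<M'. \<Sum>k\<le>n. S k * T (n - k)))" by (rule finite_cauchy[OF S T NM])
    show "lo N (fsR S * fsR T - (\<Sum>n<M'. \<Sum>k\<le>n. S k * T (n - k)))"
      unfolding ring3[of "fsR S" "fsR T" _ ?A ?B]
      by (intro lo_add lo_mult_right[OF a] lo_mult_left[OF b] c)
  qed
qed

definition toR :: "ps2 \<Rightarrow> R" where
  "toR a = Abs_fps (\<lambda>i. Abs_fps (\<lambda>j. a (i,j)))"

lemma toR_nth[simp]: "toR a $ i $ j = a (i,j)" by (simp add: toR_def)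

lemma toR_inj: "toR a = toR b \<Longrightarrow> a = b"
proof
  fix k assume "toR a = toR b"
  then have "toR a $ fst k $ snd k = toR b $ fst k $ snd k" by simp
  then show "a k = b k" by simp
qed

lemma toR_surj: "toR (\<lambda>(i,j). F $ i $ j) = F"
  by (intro fps_ext) simp

abbreviation cR :: "complex \<Rightarrow> R" where "cR c \<equiv> fps_const (fps_const c)"
abbreviation xR :: R where "xR \<equiv> fps_X"
abbreviation yR :: R where "yR \<equiv> fps_const fps_X"

lemma fps_eq2: "(\<And>i j. F $ i $ j = G $ i $ j) \<Longrightarrow> (F::R) = G"
  by (intro fps_ext) auto

lemma toR_add: "toR (ps_add a b) = toR a + toR b"
  by (rule fps_eq2) (simp add: ps_add_def)
lemma toR_sub: "toR (ps_sub a b) = toR a - toR b"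
  by (rule fps_eq2) (simp add: ps_sub_def)
lemma toR_mul: "toR (ps_mul a b) = toR a * toR b"
  by (rule fps_eq2) (simp add: ps_mul_def mult2_nth atLeast0AtMost)
lemma toR_const: "toR (ps_const c) = cR c"
  by (rule fps_eq2) (simp add: ps_const_def)
lemma toR_scale: "toR (ps_scale c a) = cR c * toR a"
  by (rule fps_eq2) (simp add: ps_scale_def)
lemma toR_X1: "toR ps_X1 = xR"
  by (rule fps_eq2) (simp add: ps_X1_def)
lemma toR_X2: "toR ps_X2 = yR"
  by (rule fps_eq2) (auto simp add: ps_X2_def)
lemma toR_pow: "toR (ps_pow a n) = toR a ^ n"
  by (induct n) (simp_all add: toR_mul toR_const)

definition D2 :: "R \<Rightarrow> R" where "D2 F = Abs_fps (\<lambda>i. fps_deriv (F $ i))"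

lemma D2_nth[simp]: "D2 F $ i $ j = of_nat (j+1) * F $ i $ (j+1)" by (simp add: D2_def)

lemma toR_d1: "toR (ps_d1 a) = fps_deriv (toR a)"
  by (rule fps_eq2) (simp add: ps_d1_def flip: fps_of_nat del: of_nat_Suc)
lemma toR_d2: "toR (ps_d2 a) = D2 (toR a)"
  by (rule fps_eq2) (simp add: ps_d2_def)
lemma toR_fsum: "toR (ps_fsum S) = fsR (\<lambda>n. toR (S n))"
  by (rule fps_eq2) (simp add: ps_fsum_def fsR_nth)

definition compR :: "R \<Rightarrow> R \<Rightarrow> R \<Rightarrow> R" where
  "compR g u v = Abs_fps (\<lambda>i. Abs_fps (\<lambda>j. \<Sum>I. \<Sum>J. g$I$J * (u^I * v^J)$i$j))"

lemma toR_comp: "toR (ps_comp g u v) = compR (toR g) (toR u) (toR v)"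
proof (rule fps_eq2)
  fix i j
  have "\<And>I J. ps_mul (ps_pow u I) (ps_pow v J) (i,j) = (toR u ^ I * toR v ^ J) $ i $ j"
    by (metis toR_mul toR_nth toR_pow)
  then show "toR (ps_comp g u v) $ i $ j = compR (toR g) (toR u) (toR v) $ i $ j"
    by (simp add: ps_comp_def compR_def)
qed

lemma toR_h: "toR ps_h = xR * yR"
  by (simp add: ps_h_def toR_mul toR_X1 toR_X2)

lemma ps_dvd_R: "ps_dvd a b \<longleftrightarrow> (\<exists>c. toR b = toR a * c)"
  unfolding ps_dvd_def
  by (metis toR_inj toR_mul toR_surj)

lemma D2_add[simp]: "D2 (F + G) = D2 F + D2 G" by (rule fps_eq2) (simp add: algebra_simps)
lemma D2_mult: "D2 (F * G) = D2 F * G + F * D2 G"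
  unfolding D2_def
  by (intro fps_ext) (simp add: fps_mult_nth fps_deriv_sum sum.distrib)

definition EE :: "R \<Rightarrow> R" where "EE F = xR * fps_deriv F - yR * D2 F"

lemma EE_nth: "EE F $ i $ j = (of_nat i - of_nat j) * F $ i $ j"
  by (cases i; cases j) (simp_all add: EE_def algebra_simps)

lemma EE_mult: "EE (F * G) = EE F * G + F * EE G"
  unfolding EE_def by (simp add: D2_mult algebra_simps)

lemma EE_lo: "lo n F \<Longrightarrow> lo n (EE F)"
  by (simp add: lo_def EE_nth)

lemma D2_x: "D2 xR = 0" by (rule fps_eq2) simp
lemma D2_y: "D2 yR = 1" by (rule fps_eq2) simp
lemma EE_x: "EE xR = xR" by (simp add: EE_def D2_x)
lemma EE_y: "EE yR = - yR" by (simp add: EE_def D2_y)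

lemma EE_h: "EE (xR * yR) = 0"
  by (simp add: EE_mult EE_x EE_y)

definition subR :: "R \<Rightarrow> (nat \<Rightarrow> R) \<Rightarrow> R" where
  "subR w c = fsR (\<lambda>n. c n * w ^ n)"

definition sub :: "R \<Rightarrow> complex fps \<Rightarrow> R" where
  "sub w A = subR w (\<lambda>n. cR (A $ n))"

lemma lo_cw: "lo 1 w \<Longrightarrow> lo n (c n * w ^ n)"
  by (intro lo_mult_left lo_power1)

lemma EV_cw: "lo 1 w \<Longrightarrow> EV (\<lambda>n. c n * w ^ n)"
  by (intro EV_lo0 lo_cw)

lemma subR_trunc: "lo 1 w \<Longrightarrow> N \<le> M \<Longrightarrow> lo N (subR w c - (\<Sum>n<M. c n * w ^ n))"
  unfolding subR_def by (rule FS0) (meson le_trans lo_cw lo_mono)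

lemma sub_trunc: "lo 1 w \<Longrightarrow> N \<le> M \<Longrightarrow> lo N (sub w A - (\<Sum>n<M. cR (A $ n) * w ^ n))"
  unfolding sub_def by (rule subR_trunc)

lemma subR_cauchy: assumes w: "lo 1 w"
  shows "subR w c * subR w d = subR w (\<lambda>n. \<Sum>k\<le>n. c k * d (n - k))"
proof -
  have "subR w c * subR w d = fsR (\<lambda>n. \<Sum>k\<le>n. (c k * w ^ k) * (d (n - k) * w ^ (n - k)))"
    unfolding subR_def by (rule fs_cauchy) (use w in \<open>auto intro: lo_cw\<close>)
  also have "\<dots> = fsR (\<lambda>n. (\<Sum>k\<le>n. c k * d (n - k)) * w ^ n)"
  proof -
    have "\<And>n. (\<Sum>k\<le>n. (c k * w ^ k) * (d (n - k) * w ^ (n - k))) = (\<Sum>k\<le>n. c k * d (n - k)) * w ^ n"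
      unfolding sum_distrib_right
    proof (rule sum.cong)
      fix n k :: nat assume "k \<in> {..n}"
      then have "w ^ k * w ^ (n - k) = w ^ n" by (simp flip: power_add)
      then show "(c k * w ^ k) * (d (n - k) * w ^ (n - k)) = c k * d (n - k) * w ^ n"
        by (metis mult.assoc mult.left_commute)
    qed simp
    then show ?thesis by simp
  qed
  finally show ?thesis unfolding subR_def .
qed

lemma subR_add: "lo 1 w \<Longrightarrow> subR w (\<lambda>n. c n + d n) = subR w c + subR w d"
  unfolding subR_def by (simp add: distrib_right fs_add EV_cw)
lemma subR_diff: "lo 1 w \<Longrightarrow> subR w (\<lambda>n. c n - d n) = subR w c - subR w d"
  unfolding subR_def by (simp add: left_diff_distrib fs_diff EV_cw)
lemma subR_mult_left: "lo 1 w \<Longrightarrow> subR w (\<lambda>n. C * c n) = C * subR w c"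
  unfolding subR_def by (simp add: mult.assoc fs_mult_left EV_cw)
lemma subR_single: "subR w (\<lambda>n. if n = m then A else 0) = A * w ^ m"
proof -
  have "(\<lambda>n. (if n = m then A else 0) * w ^ n) = (\<lambda>n. if n = m then A * w ^ m else 0)" by auto
  then show ?thesis unfolding subR_def by (simp add: fs_single)
qed
lemma subR_lo1: assumes "lo 1 w" "lo 1 (c 0)" shows "lo 1 (subR w c)"
proof -
  have "lo 1 (subR w c - (\<Sum>n<1. c n * w ^ n))" by (rule subR_trunc[OF assms(1)]) simp
  then have "lo 1 (subR w c - c 0)" by simp
  then have "lo 1 ((subR w c - c 0) + c 0)" using assms(2) by (rule lo_add)
  then show ?thesis by simp
qed

lemma fc_sum: "fps_const (sum f S) = (\<Sum>k\<in>S. fps_const (f k) :: 'a::comm_monoid_add fps)"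
proof (induct S rule: infinite_finite_induct)
  case (insert x F) then show ?case by (simp add: fps_const_add[symmetric])
qed simp_all
lemma cR_sum: "cR (sum f S) = (\<Sum>k\<in>S. cR (f k))"
  by (simp only: fc_sum)

lemma sub_mult: assumes w: "lo 1 w" shows "sub w (A * B) = sub w A * sub w B"
proof -
  have "(\<lambda>n. cR ((A * B) $ n)) = (\<lambda>n. \<Sum>k\<le>n. cR (A $ k) * cR (B $ (n - k)))"
    by (simp only: fps_mult_nth cR_sum atLeast0AtMost fps_const_mult)
  then show ?thesis unfolding sub_def subR_cauchy[OF w] by simp
qed

lemma sub_add: assumes w: "lo 1 w" shows "sub w (A + B) = sub w A + sub w B"
proof -
  have "(\<lambda>n. cR ((A + B) $ n)) = (\<lambda>n. cR (A $ n) + cR (B $ n))" by simp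
  then show ?thesis unfolding sub_def by (simp only: subR_add[OF w])
qed
lemma sub_diff: assumes w: "lo 1 w" shows "sub w (A - B) = sub w A - sub w B"
proof -
  have "(\<lambda>n. cR ((A - B) $ n)) = (\<lambda>n. cR (A $ n) - cR (B $ n))" by simp
  then show ?thesis unfolding sub_def by (simp only: subR_diff[OF w])
qed
lemma sub_const: "sub w (fps_const c) = cR c"
proof -
  have "(\<lambda>n. cR (fps_const c $ n)) = (\<lambda>n. if n = 0 then cR c else 0)" by auto
  then show ?thesis unfolding sub_def by (simp add: subR_single)
qed
lemma sub_1: "sub w 1 = 1" using sub_const[of w 1] by simp
lemma sub_X: "sub w fps_X = w"
proof -
  have "(\<lambda>n. cR ((fps_X :: complex fps) $ n)) = (\<lambda>n. if n = 1 then 1 else 0)" by (auto simp: fps_X_def)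
  then show ?thesis unfolding sub_def by (simp add: subR_single)
qed
lemma sub_power: "lo 1 w \<Longrightarrow> sub w (A ^ k) = sub w A ^ k"
  by (induct k) (simp_all add: sub_1 sub_mult)
lemma sub_lo1: "lo 1 w \<Longrightarrow> A $ 0 = 0 \<Longrightarrow> lo 1 (sub w A)"
  unfolding sub_def by (rule subR_lo1) auto

lemma lo_sum_mult: assumes a: "\<And>i. i \<in> S \<Longrightarrow> lo N (X i - Y i)"
  shows "lo N ((\<Sum>i\<in>S. C i * X i) - (\<Sum>i\<in>S. C i * Y i))"
proof -
  have e: "(\<Sum>i\<in>S. C i * X i) - (\<Sum>i\<in>S. C i * Y i) = (\<Sum>i\<in>S. C i * (X i - Y i))"
    by (simp only: sum_subtractf[symmetric] right_diff_distrib)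
  have "lo N (\<Sum>i\<in>S. C i * (X i - Y i))" by (intro lo_sum lo_mult_left a)
  then show ?thesis by (simp only: e)
qed

lemma ring_d: "(a::'a::ab_group_add) - b = (a - c) - (b - d) - (d - c)" by simp

lemma sub_compose: assumes w: "lo 1 w" and B0: "B $ 0 = 0"
  shows "sub w (A oo B) = sub (sub w B) A"
proof (rule lo_eq)
  fix N
  let ?v = "sub w B"
  have v: "lo 1 ?v" by (rule sub_lo1[OF w B0])
  have L: "lo N (sub w (A oo B) - (\<Sum>m<N. cR ((A oo B) $ m) * w ^ m))"
    by (rule sub_trunc[OF w]) simp
  have R1: "lo N (sub ?v A - (\<Sum>i<N. cR (A $ i) * ?v ^ i))"
    by (rule sub_trunc[OF v]) simp
  have R2: "lo N ((\<Sum>i<N. cR (A $ i) * ?v ^ i) - (\<Sum>i<N. cR (A $ i) * (\<Sum>m<N. cR ((B^i) $ m) * w ^ m)))"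
  proof (rule lo_sum_mult)
    fix i
    show "lo N (?v ^ i - (\<Sum>m<N. cR ((B^i) $ m) * w ^ m))"
      unfolding sub_power[OF w, symmetric] by (rule sub_trunc[OF w]) simp
  qed
  have E: "(\<Sum>i<N. cR (A $ i) * (\<Sum>m<N. cR ((B^i) $ m) * w ^ m)) = (\<Sum>m<N. cR ((A oo B) $ m) * w ^ m)"
  proof -
    have "(\<Sum>i<N. cR (A $ i) * (\<Sum>m<N. cR ((B^i) $ m) * w ^ m)) = (\<Sum>i<N. \<Sum>m<N. cR (A $ i * (B^i) $ m) * w ^ m)"
      unfolding sum_distrib_left by (rule sum.cong[OF refl], rule sum.cong[OF refl]) (simp only: fps_const_mult[symmetric] mult.assoc)
    also have "\<dots> = (\<Sum>m<N. \<Sum>i<N. cR (A $ i * (B^i) $ m) * w ^ m)" by (rule sum.swap)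
    also have "\<dots> = (\<Sum>m<N. \<Sum>i\<in>{0..m}. cR (A $ i * (B^i) $ m) * w ^ m)"
    proof (rule sum.cong[OF refl])
      fix m assume m: "m \<in> {..<N}"
      show "(\<Sum>i<N. cR (A $ i * (B^i) $ m) * w ^ m) = (\<Sum>i\<in>{0..m}. cR (A $ i * (B^i) $ m) * w ^ m)"
      proof (rule sum.mono_neutral_right)
        show "{0..m} \<subseteq> {..<N}" using m by auto
        show "\<forall>i\<in>{..<N} - {0..m}. cR (A $ i * (B^i) $ m) * w ^ m = 0"
        proof
          fix i assume "i \<in> {..<N} - {0..m}"
          then have "m < i" by auto
          then have "(B^i) $ m = 0" using startsby_zero_power_prefix[OF B0] by blast
          then show "cR (A $ i * (B^i) $ m) * w ^ m = 0" by simp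
        qed
      qed simp
    qed
    also have "\<dots> = (\<Sum>m<N. cR ((A oo B) $ m) * w ^ m)"
      by (simp only: fps_compose_nth cR_sum sum_distrib_right)
    finally show ?thesis .
  qed
  have X: "lo N ((sub w (A oo B) - (\<Sum>m<N. cR ((A oo B) $ m) * w ^ m))
     - (sub ?v A - (\<Sum>i<N. cR (A $ i) * ?v ^ i))
     - ((\<Sum>i<N. cR (A $ i) * ?v ^ i) - (\<Sum>m<N. cR ((A oo B) $ m) * w ^ m)))"
    using lo_diff[OF lo_diff[OF L R1] R2[unfolded E]] .
  show "lo N (sub w (A oo B) - sub ?v A)"
    by (subst ring_d[of _ _ "\<Sum>m<N. cR ((A oo B) $ m) * w ^ m" "\<Sum>i<N. cR (A $ i) * ?v ^ i"]) (rule X)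
qed

definition Pf :: "complex fps" where "Pf = Abs_fps (\<lambda>n. 1 / fact (n+1))"
definition Sf :: "complex fps" where "Sf = Abs_fps (\<lambda>n. (-1) ^ n / of_nat (n+1))"

lemma XPf: "fps_X * Pf = fps_exp 1 - 1"
proof (rule fps_ext)
  fix n show "(fps_X * Pf) $ n = (fps_exp 1 - 1) $ n"
    by (cases n) (auto simp: Pf_def algebra_simps)
qed

lemma XSf: "fps_X * Sf = fps_ln 1"
  by (rule fps_ext) (auto simp: Sf_def fps_ln_nth)

lemma PS_identity: "Pf * (Sf oo (fps_X * Pf)) = 1"
proof -
  let ?B = "fps_exp (1::complex) - 1"
  have B0: "?B $ 0 = 0" by simp
  have "fps_ln (1::complex) oo ?B = fps_X"
    unfolding fps_ln_fps_exp_inv[of 1, OF one_neq_zero] by (rule fps_inv_fps_exp_compose(1)) simp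
  then have "(fps_X * Sf) oo ?B = fps_X" by (simp only: XSf)
  then have 1: "?B * (Sf oo ?B) = fps_X"
    by (simp only: fps_compose_mult_distrib[OF B0] fps_X_fps_compose_startby0[OF B0])
  have "fps_X * (Pf * (Sf oo ?B)) = ?B * (Sf oo ?B)" by (simp only: XPf mult.assoc[symmetric])
  then have "fps_X * (Pf * (Sf oo ?B)) = fps_X * 1" by (simp only: 1 mult_1_right)
  then have "Pf * (Sf oo ?B) = 1" by (rule mult_left_cancel[THEN iffD1, rotated]) simp
  then show ?thesis by (simp only: XPf)
qed

lemma lo_sum_diff: "(\<And>i. i \<in> S \<Longrightarrow> lo N (X i - Y i)) \<Longrightarrow> lo N (sum X S - sum Y S)"
  by (simp only: sum_subtractf[symmetric]) (rule lo_sum)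

lemma compR_nth: "compR g u v $ i $ j = (\<Sum>I. \<Sum>J. g$I$J * (u^I * v^J)$i$j)"
  by (simp add: compR_def)

lemma compR_trunc: assumes u: "lo 1 u" and v: "lo 1 v"
  shows "lo N (compR g u v - (\<Sum>I<N. \<Sum>J<N. cR (g$I$J) * (u^I * v^J)))"
  unfolding lo_def
proof (intro allI impI)
  fix i j assume ij: "i + j < N"
  have z: "(u^I * v^J)$i$j = 0" if "N \<le> I \<or> N \<le> J" for I J
  proof -
    have "lo (I + J) (u^I * v^J)" by (intro lo_mult lo_power1 u v)
    then show ?thesis using that ij by (auto simp: lo_def)
  qed
  have inner: "(\<Sum>J. g$I$J * (u^I * v^J)$i$j) = (\<Sum>J<N. g$I$J * (u^I * v^J)$i$j)" for I
    by (rule suminf_finite) (auto simp: z)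
  have outer: "(\<Sum>I. \<Sum>J<N. g$I$J * (u^I * v^J)$i$j) = (\<Sum>I<N. \<Sum>J<N. g$I$J * (u^I * v^J)$i$j)"
    by (rule suminf_finite) (auto simp: z)
  show "(compR g u v - (\<Sum>I<N. \<Sum>J<N. cR (g$I$J) * (u^I * v^J))) $ i $ j = 0"
    by (simp add: compR_nth inner outer fps_sum_nth)
qed

lemma sub_0: "sub w 0 = 0"
  using sub_const[of w 0] by simp

lemma sub_sum: assumes w: "lo 1 w" shows "sub w (sum f S) = (\<Sum>k\<in>S. sub w (f k))"
  by (induct S rule: infinite_finite_induct) (simp_all add: sub_0 sub_add[OF w])

lemma compR_subR: assumes u: "lo 1 u" and v: "lo 1 v"
  shows "compR g u v = subR u (\<lambda>I. sub v (g$I))"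
proof (rule lo_eq)
  fix N
  let ?S0 = "\<Sum>I<N. \<Sum>J<N. cR (g$I$J) * (u^I * v^J)"
  let ?S1 = "\<Sum>I<N. sub v (g$I) * u^I"
  let ?S2 = "\<Sum>I<N. (\<Sum>J<N. cR (g$I$J) * v^J) * u^I"
  have a: "lo N (compR g u v - ?S0)" by (rule compR_trunc[OF u v])
  have b: "lo N (subR u (\<lambda>I. sub v (g$I)) - ?S1)" by (rule subR_trunc[OF u]) simp
  have c: "lo N (?S1 - ?S2)"
  proof (rule lo_sum_diff)
    fix I
    have "lo N (sub v (g$I) - (\<Sum>J<N. cR (g$I$J) * v^J))" by (rule sub_trunc[OF v]) simp
    then have "lo N ((sub v (g$I) - (\<Sum>J<N. cR (g$I$J) * v^J)) * u^I)" by (rule lo_mult_right)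
    then show "lo N (sub v (g$I) * u^I - (\<Sum>J<N. cR (g$I$J) * v^J) * u^I)"
      by (simp only: left_diff_distrib)
  qed
  have d: "?S2 = ?S0"
  proof (rule sum.cong[OF refl])
    fix I
    show "(\<Sum>J<N. cR (g$I$J) * v^J) * u^I = (\<Sum>J<N. cR (g$I$J) * (u^I * v^J))"
      unfolding sum_distrib_right by (rule sum.cong[OF refl]) (simp only: ac_simps)
  qed
  have X: "lo N ((compR g u v - ?S0) - (subR u (\<lambda>I. sub v (g$I)) - ?S1) - (?S1 - ?S0))"
    using lo_diff[OF lo_diff[OF a b] c[unfolded d]] .
  show "lo N (compR g u v - subR u (\<lambda>I. sub v (g$I)))"
    by (subst ring_d[of _ _ ?S0 ?S1]) (rule X)
qed

lemma compR_mult: assumes u: "lo 1 u" and v: "lo 1 v"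
  shows "compR (g * k) u v = compR g u v * compR k u v"
proof -
  have "\<And>I. sub v ((g * k) $ I) = (\<Sum>i\<le>I. sub v (g $ i) * sub v (k $ (I - i)))"
    by (simp only: fps_mult_nth sub_sum[OF v] sub_mult[OF v] atLeast0AtMost)
  then show ?thesis
    unfolding compR_subR[OF u v] subR_cauchy[OF u] by simp
qed

lemma compR_X: assumes u: "lo 1 u" and v: "lo 1 v" shows "compR xR u v = u"
proof -
  have "(\<lambda>I. sub v (xR $ I)) = (\<lambda>I. if I = 1 then 1 else 0)"
    by (auto simp: fps_X_def sub_1 sub_0)
  then show ?thesis unfolding compR_subR[OF u v] by (simp add: subR_single)
qed

lemma compR_Y: assumes u: "lo 1 u" and v: "lo 1 v" shows "compR yR u v = v"
proof -
  have "(\<lambda>I. sub v (yR $ I)) = (\<lambda>I. if I = 0 then v else 0)"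
    by (auto simp: sub_X sub_0)
  then show ?thesis unfolding compR_subR[OF u v] by (simp add: subR_single)
qed

lemma lo1_iff: "lo 1 F \<longleftrightarrow> F $ 0 $ 0 = 0" by (simp add: lo_def)

lemma lo1_X: "lo 1 xR" by (simp add: lo_def)
lemma lo1_Y: "lo 1 yR" by (simp add: lo_def)

lemma compR_lo1: assumes u: "lo 1 u" and v: "lo 1 v" and g: "g $ 0 $ 0 = 0"
  shows "lo 1 (compR g u v)"
proof -
  have "lo 1 (compR g u v - (\<Sum>I<1. \<Sum>J<1. cR (g$I$J) * (u^I * v^J)))" by (rule compR_trunc[OF u v])
  then show ?thesis using g by simp
qed

lemma iter_h:
  assumes p1: "lo 1 (toR (fst phi))" and p2: "lo 1 (toR (snd phi))"
    and pp: "toR (fst phi) * toR (snd phi) = xR * yR"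
  shows "lo 1 (toR (fst (map_iter phi n))) \<and> lo 1 (toR (snd (map_iter phi n)))
         \<and> toR (fst (map_iter phi n)) * toR (snd (map_iter phi n)) = xR * yR"
proof (induct n)
  case 0 then show ?case using lo1_X lo1_Y by (simp add: map_id_def toR_X1 toR_X2)
next
  case (Suc n)
  let ?u = "toR (fst (map_iter phi n))" and ?v = "toR (snd (map_iter phi n))"
  have u: "lo 1 ?u" and v: "lo 1 ?v" and uv: "?u * ?v = xR * yR" using Suc by auto
  have e1: "toR (fst (map_iter phi (Suc n))) = compR (toR (fst phi)) ?u ?v"
    by (simp add: map_comp_def toR_comp)
  have e2: "toR (snd (map_iter phi (Suc n))) = compR (toR (snd phi)) ?u ?v"
    by (simp add: map_comp_def toR_comp)
  have "compR (toR (fst phi)) ?u ?v * compR (toR (snd phi)) ?u ?v = compR (xR * yR) ?u ?v"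
    by (simp only: compR_mult[OF u v, symmetric] pp)
  also have "\<dots> = xR * yR" by (simp only: compR_mult[OF u v] compR_X[OF u v] compR_Y[OF u v] uv)
  finally have pr: "compR (toR (fst phi)) ?u ?v * compR (toR (snd phi)) ?u ?v = xR * yR" .
  have z: "toR (fst phi) $ 0 $ 0 = 0" "toR (snd phi) $ 0 $ 0 = 0" using p1 p2 by (simp_all add: lo_def)
  show ?case unfolding e1 e2
    using compR_lo1[OF u v z(1)] compR_lo1[OF u v z(2)] pr by (intro conjI)
qed

definition VV :: "R \<Rightarrow> R \<Rightarrow> R \<Rightarrow> R" where "VV P Q F = P * fps_deriv F + Q * D2 F"

lemma D2_cR: "D2 (cR c) = 0" by (rule fps_eq2) simp
lemma D2_sum: "D2 (sum f S) = (\<Sum>k\<in>S. D2 (f k))"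
  by (induct S rule: infinite_finite_induct) (simp_all add: D2_cR[of 0, simplified])
lemma ofnat_R: "(of_nat m :: R) = cR (of_nat m)" by (simp flip: fps_of_nat)

lemma VV_add: "VV P Q (F + G) = VV P Q F + VV P Q G"
  by (simp add: VV_def algebra_simps)
lemma VV_0: "VV P Q 0 = 0"
  by (simp add: VV_def D2_cR[of 0, simplified])
lemma VV_sum: "VV P Q (sum f S) = (\<Sum>k\<in>S. VV P Q (f k))"
  by (induct S rule: infinite_finite_induct) (simp_all add: VV_add VV_0)
lemma VV_mult: "VV P Q (F * G) = VV P Q F * G + F * VV P Q G"
  by (simp add: VV_def D2_mult algebra_simps)
lemma VV_cR: "VV P Q (cR c * F) = cR c * VV P Q F"
  by (simp add: VV_def D2_mult D2_cR algebra_simps)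
lemma VV_ofnat: "VV P Q (of_nat m * F) = of_nat m * VV P Q F"
  by (simp only: ofnat_R VV_cR)

lemma VV_ofnat2: "VV P Q (of_nat m * (A * B)) = of_nat m * (VV P Q A * B + A * VV P Q B)"
  by (subst VV_ofnat, subst VV_mult, rule refl)

lemma lo_deriv: "lo (Suc m) F \<Longrightarrow> lo m (fps_deriv F)"
  unfolding lo_def fps_deriv_nth fps_of_nat[symmetric] fps_mult_left_const_nth by auto
lemma lo_D2: "lo (Suc m) F \<Longrightarrow> lo m (D2 F)"
  by (simp add: lo_def)

lemma VV_lo: assumes P: "lo 2 P" and Q: "lo 2 Q" and F: "lo m F" shows "lo (Suc m) (VV P Q F)"
proof (cases m)
  case 0
  have "lo 2 (VV P Q F)" unfolding VV_def by (intro lo_add lo_mult_right P Q)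
  then show ?thesis using 0 by (auto intro: lo_mono)
next
  case (Suc k)
  have "lo (2 + k) (VV P Q F)" unfolding VV_def
    using F Suc by (intro lo_add lo_mult P Q lo_deriv lo_D2) auto
  then show ?thesis using Suc by (auto intro: lo_mono)
qed

lemma Vn_lo: assumes P: "lo 2 P" and Q: "lo 2 Q" shows "lo n ((VV P Q ^^ n) F)"
  by (induct n) (auto intro: VV_lo[OF P Q])

lemma pascal_sum:
  fixes A B :: "nat \<Rightarrow> 'a::comm_ring_1"
  shows "(\<Sum>k\<le>n. of_nat (n choose k) * (A (Suc k) * B (n - k) + A k * B (Suc (n - k)))) =
         (\<Sum>k\<le>Suc n. of_nat (Suc n choose k) * (A k * B (Suc n - k)))"
proof -
  have s2: "(\<Sum>k\<le>n. of_nat (n choose k) * (A k * B (Suc (n - k)))) =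
        A 0 * B (Suc n) + (\<Sum>k\<le>n. of_nat (n choose Suc k) * (A (Suc k) * B (n - k)))"
  proof -
    have "(\<Sum>k\<le>n. of_nat (n choose k) * (A k * B (Suc (n - k)))) =
          (\<Sum>k\<le>n. of_nat (n choose k) * (A k * B (Suc n - k)))"
      by (intro sum.cong) (auto simp: Suc_diff_le)
    also have "\<dots> = (\<Sum>k\<le>Suc n. of_nat (n choose k) * (A k * B (Suc n - k)))"
      by (simp add: sum.atMost_Suc binomial_eq_0)
    also have "\<dots> = A 0 * B (Suc n) + (\<Sum>k\<le>n. of_nat (n choose Suc k) * (A (Suc k) * B (n - k)))"
      by (subst sum.atMost_Suc_shift) simp
    finally show ?thesis .
  qed
  have r: "(\<Sum>k\<le>Suc n. of_nat (Suc n choose k) * (A k * B (Suc n - k))) =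
     A 0 * B (Suc n) + (\<Sum>k\<le>n. of_nat (n choose k) * (A (Suc k) * B (n - k)))
       + (\<Sum>k\<le>n. of_nat (n choose Suc k) * (A (Suc k) * B (n - k)))"
    by (subst sum.atMost_Suc_shift) (simp add: ring_distribs sum.distrib)
  show ?thesis unfolding r
    by (simp add: ring_distribs sum.distrib s2)
qed

lemma leibniz: "(VV P Q ^^ n) (F * G) =
   (\<Sum>k\<le>n. of_nat (n choose k) * ((VV P Q ^^ k) F * (VV P Q ^^ (n - k)) G))"
proof (induct n)
  case 0 then show ?case by simp
next
  case (Suc n)
  have "(VV P Q ^^ Suc n) (F * G) = VV P Q ((VV P Q ^^ n) (F * G))" by simp
  also have "\<dots> = (\<Sum>k\<le>n. of_nat (n choose k) *
      ((VV P Q ^^ Suc k) F * (VV P Q ^^ (n - k)) G + (VV P Q ^^ k) F * (VV P Q ^^ Suc (n - k)) G))"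
    unfolding Suc by (simp only: VV_sum VV_ofnat2 funpow.simps comp_def Suc_diff_le[symmetric])
  also have "\<dots> = (\<Sum>k\<le>Suc n. of_nat (Suc n choose k) * ((VV P Q ^^ k) F * (VV P Q ^^ (Suc n - k)) G))"
    by (rule pascal_sum[where A = "\<lambda>k. (VV P Q ^^ k) F" and B = "\<lambda>k. (VV P Q ^^ k) G"])
  finally show ?case .
qed

lemma leibniz_exp: "cR (1 / fact n) * (VV P Q ^^ n) (F * G) =
   (\<Sum>k\<le>n. (cR (1 / fact k) * (VV P Q ^^ k) F) * (cR (1 / fact (n - k)) * (VV P Q ^^ (n - k)) G))"
proof -
  have "cR (1 / fact n) * (VV P Q ^^ n) (F * G) =
     (\<Sum>k\<le>n. cR (1 / fact n) * (of_nat (n choose k) * ((VV P Q ^^ k) F * (VV P Q ^^ (n - k)) G)))"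
    by (simp only: leibniz sum_distrib_left)
  also have "\<dots> = (\<Sum>k\<le>n. (cR (1 / fact k) * (VV P Q ^^ k) F) * (cR (1 / fact (n - k)) * (VV P Q ^^ (n - k)) G))"
  proof (rule sum.cong[OF refl])
    fix k assume k: "k \<in> {..n}"
    have c: "(1 / fact n) * (of_nat (n choose k) :: complex) = (1 / fact k) * (1 / fact (n - k))"
      using k by (simp add: binomial_fact)
    have "cR (1 / fact n) * of_nat (n choose k) = cR (1 / fact k) * cR (1 / fact (n - k))"
      unfolding ofnat_R fps_const_mult c ..
    then show "cR (1 / fact n) * (of_nat (n choose k) * ((VV P Q ^^ k) F * (VV P Q ^^ (n - k)) G)) =
          (cR (1 / fact k) * (VV P Q ^^ k) F) * (cR (1 / fact (n - k)) * (VV P Q ^^ (n - k)) G)"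
      by (simp only: mult.assoc[symmetric]) (simp only: ac_simps)
  qed
  finally show ?thesis .
qed

definition Tx :: "R \<Rightarrow> R \<Rightarrow> R \<Rightarrow> R" where
  "Tx P Q F = fsR (\<lambda>n. cR (1 / fact n) * (VV P Q ^^ n) F)"

lemma Tx_mult: assumes P: "lo 2 P" and Q: "lo 2 Q"
  shows "Tx P Q (F * G) = Tx P Q F * Tx P Q G"
  unfolding Tx_def
  by (subst fs_cauchy) (simp_all add: lo_mult_left Vn_lo[OF P Q] leibniz_exp)

lemma D1_h: "fps_deriv (xR * yR) = yR" by simp
lemma D2_h: "D2 (xR * yR) = xR" by (simp add: D2_mult D2_x D2_y)

lemma Vh_zero: assumes P: "lo 2 P" and Q: "lo 2 Q" and T: "Tx P Q xR * Tx P Q yR = xR * yR"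
  shows "P * yR + Q * xR = 0"
proof -
  let ?Z = "VV P Q (xR * yR)"
  have Zdef: "?Z = P * yR + Q * xR" by (simp add: VV_def D2_h)
  have EVa: "EV (\<lambda>n. cR (1 / fact n) * (VV P Q ^^ n) F)" for F
    by (intro EV_lo0 lo_mult_left Vn_lo[OF P Q])
  have "Tx P Q (xR * yR) = xR * yR" using T Tx_mult[OF P Q] by simp
  then have "xR * yR + fsR (\<lambda>n. cR (1 / fact (Suc n)) * (VV P Q ^^ Suc n) (xR * yR)) = xR * yR"
    unfolding Tx_def by (subst (asm) fs_shift[OF EVa]) simp
  then have z1: "fsR (\<lambda>n. cR (1 / fact (Suc n)) * (VV P Q ^^ n) ?Z) = 0"
    by (simp add: funpow_Suc_right del: funpow.simps)
  have EVb: "EV (\<lambda>n. cR (1 / fact (Suc n)) * (VV P Q ^^ n) ?Z)"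
    by (intro EV_lo0 lo_mult_left Vn_lo[OF P Q])
  have EVc: "EV (\<lambda>n. cR (1 / fact (Suc (Suc n))) * (VV P Q ^^ Suc n) ?Z)"
    by (rule EV_lo0, rule lo_mult_left, rule lo_mono[OF Vn_lo[OF P Q]]) simp
  have z2: "?Z + fsR (\<lambda>n. cR (1 / fact (Suc (Suc n))) * (VV P Q ^^ Suc n) ?Z) = 0"
    using z1 by (subst (asm) fs_shift[OF EVb]) simp
  have "lo m ?Z" for m
  proof (induct m)
    case (Suc m)
    have IH: "lo m ?Z" by (rule Suc.hyps)
    have "lo (Suc m) (fsR (\<lambda>n. cR (1 / fact (Suc (Suc n))) * (VV P Q ^^ Suc n) ?Z))"
    proof (rule fs_lo[OF EVc])
      fix n
      have "lo (Suc n + m) ((VV P Q ^^ Suc n) ?Z)"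
      proof -
        have "lo (k + m) ((VV P Q ^^ k) ?Z)" for k
        proof (induct k)
          case 0 show ?case using IH by simp
        next
          case (Suc k) then show ?case using VV_lo[OF P Q] by simp
        qed
        then show ?thesis .
      qed
      then show "lo (Suc m) (cR (1 / fact (Suc (Suc n))) * (VV P Q ^^ Suc n) ?Z)"
        by (intro lo_mult_left) (auto intro: lo_mono)
    qed
    then have "lo (Suc m) (- fsR (\<lambda>n. cR (1 / fact (Suc (Suc n))) * (VV P Q ^^ Suc n) ?Z))"
      by (rule lo_uminus)
    moreover have "?Z = - fsR (\<lambda>n. cR (1 / fact (Suc (Suc n))) * (VV P Q ^^ Suc n) ?Z)"
      using z2 by (simp add: eq_neg_iff_add_eq_0)
    ultimately show ?case by simp
  qed simp
  then have "?Z = 0" by (intro lo_eq) simp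
  then show ?thesis using Zdef by simp
qed

fun bb :: "R \<Rightarrow> nat \<Rightarrow> R" where
  "bb a 0 = 1"
| "bb a (Suc n) = a * (bb a n + EE (bb a n))"

fun be :: "R \<Rightarrow> nat \<Rightarrow> R" where
  "be a 0 = 1"
| "be a (Suc n) = a * be a n + EE (a * be a n)"

fun ga :: "R \<Rightarrow> nat \<Rightarrow> R" where
  "ga a 0 = 0"
| "ga a (Suc n) = EE a * ga a n + be a n + EE (be a n)"

lemma EE_1: "EE 1 = 0"
  by (rule fps_eq2) (simp add: EE_nth)

lemma EE_add: "EE (F + G) = EE F + EE G"
  by (rule fps_eq2) (simp add: EE_nth algebra_simps)

lemma Vn_x: "((\<lambda>F. a * EE F) ^^ n) xR = bb a n * xR"
proof (induct n)
  case (Suc n)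
  have "((\<lambda>F. a * EE F) ^^ Suc n) xR = a * EE (bb a n * xR)" using Suc by simp
  also have "\<dots> = bb a (Suc n) * xR" by (simp add: EE_mult EE_x algebra_simps)
  finally show ?case .
qed simp

lemma bb_be: "bb a (Suc n) = a * be a n"
proof (induct n)
  case 0 then show ?case by (simp add: EE_1)
next
  case (Suc n)
  have "bb a (Suc (Suc n)) = a * (a * be a n + EE (a * be a n))" by (simp only: bb.simps(2)[of a "Suc n"] Suc)
  then show ?case by simp
qed

lemma be_lo: "lo 1 a \<Longrightarrow> lo n (be a n)"
proof (induct n)
  case (Suc n)
  then have "lo (1 + n) (a * be a n)" by (intro lo_mult) auto
  then show ?case by (simp add: lo_add EE_lo)
qed simp

lemma bb_lo: assumes a: "lo 1 a" shows "lo n (bb a n)"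
proof (cases n)
  case (Suc k)
  have "lo (1 + k) (a * be a k)" by (intro lo_mult a be_lo)
  then show ?thesis unfolding Suc bb_be by simp
qed simp

lemma geo_aux: assumes h: "(v::'a::comm_ring_1) = 1 + z * v" shows "(1 - z) * v = 1"
proof -
  have "(1 - z) * v = v - z * v" by (simp add: algebra_simps)
  then show ?thesis by (metis h add_diff_cancel_right')
qed

lemma be_ga: "be a n = EE a ^ n + a * ga a n"
proof (induct n)
  case (Suc n)
  have "be a (Suc n) = a * be a n + (EE a * be a n + a * EE (be a n))" by (simp add: EE_mult)
  also have "\<dots> = EE a ^ Suc n + a * ga a (Suc n)"
    by (simp only: Suc ga.simps power_Suc) (simp add: algebra_simps)
  finally show ?case .
qed simp

lemma ga_lo: assumes a: "lo 1 a" shows "lo (n - 1) (ga a n)"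
proof (induct n)
  case (Suc n)
  have w: "lo 1 (EE a)" by (rule EE_lo[OF a])
  have "lo (1 + (n - 1)) (EE a * ga a n)" by (rule lo_mult[OF w Suc])
  then have 1: "lo n (EE a * ga a n)" by (rule lo_mono) simp
  have 2: "lo n (be a n)" by (rule be_lo[OF a])
  have 3: "lo n (EE (be a n))" by (rule EE_lo[OF 2])
  show ?case using lo_add[OF lo_add[OF 1 2] 3] by simp
qed simp

lemma unit_inv: assumes "lo 1 (u - 1)" shows "u * fsR (\<lambda>n. (1 - u) ^ n) = 1"
proof -
  let ?z = "1 - u"
  have z: "lo 1 ?z" using lo_uminus[OF assms] by simp
  have EVz: "EV (\<lambda>n. ?z ^ n)" by (intro EV_lo0 lo_power1 z)
  have "fsR (\<lambda>n. ?z ^ n) = 1 + fsR (\<lambda>n. ?z * ?z ^ n)"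
    using fs_shift[OF EVz] by simp
  also have "\<dots> = 1 + ?z * fsR (\<lambda>n. ?z ^ n)" by (simp only: fs_mult_left[OF EVz])
  finally have e: "fsR (\<lambda>n. ?z ^ n) = 1 + ?z * fsR (\<lambda>n. ?z ^ n)" .
  from geo_aux[OF e] show ?thesis by simp
qed

lemma sub_diff_factor: assumes y1: "lo 1 y1" and y2: "lo 1 y2"
  shows "\<exists>K. sub y1 A - sub y2 A = (y1 - y2) * K"
proof -
  let ?K = "\<lambda>n. cR (A $ Suc n) * (\<Sum>i<Suc n. y2 ^ (Suc n - Suc i) * y1 ^ i)"
  have EVK: "EV ?K"
  proof (rule EV_lo0, rule lo_mult_left, rule lo_sum)
    fix n i assume "i \<in> {..<Suc n}"
    then have "lo ((Suc n - Suc i) + i) (y2 ^ (Suc n - Suc i) * y1 ^ i)"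
      by (intro lo_mult lo_power1 y1 y2)
    then show "lo n (y2 ^ (Suc n - Suc i) * y1 ^ i)" using \<open>i \<in> {..<Suc n}\<close> by (simp add: Suc_diff_le)
  qed
  have D: "EV (\<lambda>n. cR (A $ n) * (y1 ^ n - y2 ^ n))"
    unfolding right_diff_distrib by (intro EV_diff EV_cw y1 y2)
  have "sub y1 A - sub y2 A = fsR (\<lambda>n. cR (A $ n) * y1 ^ n - cR (A $ n) * y2 ^ n)"
    unfolding sub_def subR_def by (rule fs_diff[symmetric]) (intro EV_cw y1 y2)+
  also have "\<dots> = fsR (\<lambda>n. cR (A $ n) * (y1 ^ n - y2 ^ n))" by (simp only: right_diff_distrib)
  also have "\<dots> = fsR (\<lambda>n. cR (A $ Suc n) * (y1 ^ Suc n - y2 ^ Suc n))"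
    by (subst fs_shift[OF D]) simp
  also have "\<dots> = fsR (\<lambda>n. (y1 - y2) * ?K n)"
    by (simp only: power_diff_sumr2[of y1 "Suc _" y2] mult.left_commute)
  also have "\<dots> = (y1 - y2) * fsR ?K" by (rule fs_mult_left[OF EVK])
  finally show ?thesis by blast
qed

lemma toR_vf_apply: "toR (vf_apply X g) = VV (toR (fst X)) (toR (snd X)) (toR g)"
  by (simp add: vf_apply_def VV_def toR_add toR_mul toR_d1 toR_d2)
lemma toR_vf_iter: "toR (vf_apply_iter X n g) = (VV (toR (fst X)) (toR (snd X)) ^^ n) (toR g)"
  by (induct n) (simp_all add: toR_vf_apply)
lemma toR_vf_exp1: "toR (fst (vf_exp X)) = Tx (toR (fst X)) (toR (snd X)) xR"
  by (simp add: vf_exp_def toR_fsum toR_scale toR_vf_iter toR_X1 Tx_def)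
lemma toR_vf_exp2: "toR (snd (vf_exp X)) = Tx (toR (fst X)) (toR (snd X)) yR"
  by (simp add: vf_exp_def toR_fsum toR_scale toR_vf_iter toR_X2 Tx_def)

lemma cRm1: "cR (-1) = -1" by (rule fps_eq2) simp

lemma negc_mult: "fps_const (- c) * G = - (fps_const c * (G::'a::comm_ring_1 fps))"
  by (simp flip: fps_const_neg)

lemma toR_EE: "toR (vf_apply vf_E g) = EE (toR g)"
  by (simp add: vf_apply_def vf_E_def toR_add toR_mul toR_d1 toR_d2 toR_X1 toR_X2 toR_scale EE_def cRm1 negc_mult)

lemma toR_log: "toR (log_coeff f) = toR f * sub (EE (toR f)) Sf"
  by (simp add: log_coeff_def toR_mul toR_fsum toR_scale toR_pow toR_EE sub_def subR_def Sf_def)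

theorem mainTheorem17:
  fixes phi :: map2 and p :: nat and lam :: complex
    and X :: vf2 and f :: ps2 and s :: nat
  assumes conv: "ps_convergent (fst phi) \<and> ps_convergent (snd phi)"
    and lin: "(lam \<noteq> 0 \<and> has_linear_part phi lam 0 0 (1 / lam)) \<or> has_linear_part phi 0 (-1) (-1) 0"
    and p: "p \<ge> 1"
    and tang: "tangent_to_id (map_iter phi p)"
    and gen: "vf_order_ge2 X \<and> vf_exp X = map_iter phi p"
    and rev: "map_comp (map_comp (map_comp sigma phi) sigma) phi = map_id
              \<and> map_comp phi (map_comp (map_comp sigma phi) sigma) = map_id"
    and integral: "ps_comp ps_h (fst phi) (snd phi) = ps_h"
    and f_def: "ps_mul ps_X1 f = ps_sub (fst (map_iter phi p)) ps_X1"
    and s_max: "ps_dvd (ps_pow ps_h s) f \<and> \<not> ps_dvd (ps_pow ps_h (Suc s)) f"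
  shows "\<exists>g q. ps_pow f 2 = ps_mul (ps_pow ps_h s) q \<and>
               vf_sub X (vf_scale (log_coeff f) vf_E) = vf_scale (ps_mul g q) vf_E"
proof -
  define P where "P = toR (fst X)"
  define Q where "Q = toR (snd X)"
  have ord: "vf_order_ge2 X" using gen by blast
  have P2: "lo 2 P" unfolding lo_def P_def using ord by (auto simp: vf_order_ge2_def)
  have Q2: "lo 2 Q" unfolding lo_def Q_def using ord by (auto simp: vf_order_ge2_def)
  let ?Phi = "map_iter phi p"
  have Ph1: "toR (fst ?Phi) = Tx P Q xR" using gen toR_vf_exp1[of X] by (simp add: P_def Q_def)
  have Ph2: "toR (snd ?Phi) = Tx P Q yR" using gen toR_vf_exp2[of X] by (simp add: P_def Q_def)
  have z00: "fst phi (0,0) = 0" "snd phi (0,0) = 0" using lin by (auto simp: has_linear_part_def)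
  have p1: "lo 1 (toR (fst phi))" using z00 by (simp add: lo_def)
  have p2: "lo 1 (toR (snd phi))" using z00 by (simp add: lo_def)
  have "compR (xR * yR) (toR (fst phi)) (toR (snd phi)) = xR * yR"
    using arg_cong[OF integral, of toR] by (simp add: toR_comp toR_h)
  then have pp: "toR (fst phi) * toR (snd phi) = xR * yR"
    by (simp only: compR_mult[OF p1 p2] compR_X[OF p1 p2] compR_Y[OF p1 p2])
  have hh: "toR (fst ?Phi) * toR (snd ?Phi) = xR * yR" using iter_h[OF p1 p2 pp] by blast
  have Z: "P * yR + Q * xR = 0" by (rule Vh_zero[OF P2 Q2]) (use hh Ph1 Ph2 in simp)
  have "(P * yR + Q * xR) $ 0 = P $ 0 * fps_X" by simp
  then have "P $ 0 * fps_X = 0" using Z by simp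
  then have P0: "P $ 0 = 0" by simp
  define a where "a = fps_shift 1 P"
  have Pa: "P = xR * a"
  proof (rule fps_ext)
    fix n show "P $ n = (xR * a) $ n" by (cases n) (simp_all add: a_def P0)
  qed
  have "xR * (a * yR + Q) = 0" using Z unfolding Pa by (simp add: algebra_simps)
  then have "a * yR + Q = 0" by simp
  then have Qa: "Q = - (a * yR)" by (simp add: eq_neg_iff_add_eq_0 add.commute)
  have a1: "lo 1 a"
  proof -
    have "P $ 1 $ 0 = 0" using P2 by (simp add: lo_def)
    then show ?thesis by (simp add: lo_def a_def)
  qed
  have VVa: "VV P Q = (\<lambda>F. a * EE F)" by (rule ext) (simp add: VV_def EE_def Pa Qa algebra_simps)
  define Fr where "Fr = toR f"
  define w where "w = EE a"
  have w1: "lo 1 w" unfolding w_def by (rule EE_lo[OF a1])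
  define u where "u = fsR (\<lambda>n. cR (1 / fact (Suc n)) * be a n)"
  have EVbb: "EV (\<lambda>n. cR (1 / fact n) * bb a n)" by (intro EV_lo0 lo_mult_left bb_lo a1)
  have EVbe: "EV (\<lambda>n. cR (1 / fact (Suc n)) * be a n)" by (intro EV_lo0 lo_mult_left be_lo a1)
  have Txx: "Tx P Q xR = xR * (1 + a * u)"
  proof -
    have "Tx P Q xR = fsR (\<lambda>n. xR * (cR (1 / fact n) * bb a n))"
      unfolding Tx_def VVa Vn_x by (simp only: ac_simps)
    also have "\<dots> = xR * fsR (\<lambda>n. cR (1 / fact n) * bb a n)" by (rule fs_mult_left[OF EVbb])
    also have "fsR (\<lambda>n. cR (1 / fact n) * bb a n) = 1 + fsR (\<lambda>n. cR (1 / fact (Suc n)) * bb a (Suc n))"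
      by (subst fs_shift[OF EVbb]) simp
    also have "fsR (\<lambda>n. cR (1 / fact (Suc n)) * bb a (Suc n)) = fsR (\<lambda>n. a * (cR (1 / fact (Suc n)) * be a n))"
      by (simp only: bb_be ac_simps)
    also have "\<dots> = a * u" unfolding u_def by (rule fs_mult_left[OF EVbe])
    finally show ?thesis .
  qed
  have "xR * Fr = toR (fst ?Phi) - xR"
    using arg_cong[OF f_def, of toR] by (simp add: toR_mul toR_sub toR_X1 Fr_def)
  also have "\<dots> = xR * (a * u)" unfolding Ph1 Txx by (simp add: algebra_simps)
  finally have Fau: "Fr = a * u" by simp
  define Gam where "Gam = fsR (\<lambda>n. cR (1 / fact (Suc n)) * ga a n)"
  define Pw where "Pw = sub w Pf"
  have EVga: "EV (\<lambda>n. cR (1 / fact (Suc n)) * ga a n)" by (intro EV_lo[of 1] lo_mult_left ga_lo a1)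
  have EVw: "EV (\<lambda>n. cR (1 / fact (Suc n)) * w ^ n)" by (rule EV_cw[OF w1])
  have uPw: "u = Pw + a * Gam"
  proof -
    have "u = fsR (\<lambda>n. cR (1 / fact (Suc n)) * w ^ n + a * (cR (1 / fact (Suc n)) * ga a n))"
      unfolding u_def be_ga w_def by (simp only: ring_distribs ac_simps)
    also have "\<dots> = fsR (\<lambda>n. cR (1 / fact (Suc n)) * w ^ n) + fsR (\<lambda>n. a * (cR (1 / fact (Suc n)) * ga a n))"
      by (rule fs_add[OF EVw EV_mult[OF EVga]])
    also have "fsR (\<lambda>n. a * (cR (1 / fact (Suc n)) * ga a n)) = a * Gam"
      unfolding Gam_def by (rule fs_mult_left[OF EVga])
    also have "fsR (\<lambda>n. cR (1 / fact (Suc n)) * w ^ n) = Pw"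
      unfolding Pw_def sub_def subR_def Pf_def by simp
    finally show ?thesis by simp
  qed
  have u1: "lo 1 (u - 1)"
  proof -
    have "lo 1 (Pw - (\<Sum>n<1. cR (Pf $ n) * w ^ n))" unfolding Pw_def by (rule sub_trunc[OF w1]) simp
    then have 1: "lo 1 (Pw - 1)" by (simp add: Pf_def)
    have 2: "lo 1 (a * Gam)" by (rule lo_mult_right[OF a1])
    have e: "u - 1 = (Pw - 1) + a * Gam" unfolding uPw by simp
    show ?thesis unfolding e by (rule lo_add[OF 1 2])
  qed
  define v where "v = fsR (\<lambda>n. (1 - u) ^ n)"
  have uv: "u * v = 1" unfolding v_def by (rule unit_inv[OF u1])
  let ?H = "(xR * yR) ^ s"
  obtain phi0 where phi0: "Fr = ?H * phi0"
    using s_max unfolding ps_dvd_R by (auto simp: toR_pow toR_h Fr_def)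
  have a_alpha: "a = ?H * (phi0 * v)"
  proof -
    have "a = a * (u * v)" by (simp add: uv)
    also have "\<dots> = Fr * v" by (simp add: Fau mult.assoc)
    also have "\<dots> = ?H * (phi0 * v)" by (simp add: phi0 mult.assoc)
    finally show ?thesis .
  qed
  have EEF: "EE Fr = w * u + a * EE u" by (simp add: Fau EE_mult w_def)
  have y1: "lo 1 (EE Fr)" unfolding Fau by (intro EE_lo lo_mult_right a1)
  have y2: "lo 1 (w * Pw)" by (rule lo_mult_right[OF w1])
  obtain K where K: "sub (EE Fr) Sf - sub (w * Pw) Sf = (EE Fr - w * Pw) * K"
    using sub_diff_factor[OF y1 y2] by blast
  have dy: "EE Fr - w * Pw = a * (w * Gam + EE u)"
  proof -
    have "EE Fr - w * Pw = w * (u - Pw) + a * EE u" by (simp add: EEF algebra_simps)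
    also have "u - Pw = a * Gam" using uPw by simp
    finally show ?thesis by (simp add: algebra_simps)
  qed
  have XP0: "(fps_X * Pf) $ 0 = 0" by simp
  have comp: "sub (w * Pw) Sf = sub w (Sf oo (fps_X * Pf))"
    unfolding sub_compose[OF w1 XP0] sub_mult[OF w1] sub_X Pw_def ..
  let ?S2 = "sub (w * Pw) Sf"
  have one: "Pw * ?S2 = 1"
    unfolding comp unfolding Pw_def sub_mult[OF w1, symmetric] PS_identity sub_1 ..
  define T where "T = sub (EE Fr) Sf"
  have T_eq: "T = ?S2 + a * ((w * Gam + EE u) * K)"
    using K unfolding dy T_def by (simp add: algebra_simps)
  define r where "r = Gam * ?S2 + u * ((w * Gam + EE u) * K)"
  have uS2: "u * ?S2 = 1 + a * (Gam * ?S2)"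
  proof -
    have "u * ?S2 = Pw * ?S2 + a * (Gam * ?S2)" unfolding uPw by (simp add: algebra_simps)
    then show ?thesis unfolding one .
  qed
  have uT: "u * T = 1 + a * r"
  proof -
    have "u * T = u * ?S2 + a * (u * ((w * Gam + EE u) * K))" unfolding T_eq by (simp add: algebra_simps)
    then show ?thesis unfolding uS2 r_def by (simp add: algebra_simps)
  qed
  have aL: "a - Fr * T = - (a * a * r)"
  proof -
    have "Fr * T = a * (u * T)" by (simp add: Fau mult.assoc)
    then show ?thesis unfolding uT by (simp add: algebra_simps)
  qed
  define q where "q = Fr * phi0"
  define g where "g = - (?H * v * v * r)"
  have gq: "a - Fr * T = g * q"
  proof -
    have "g * q = - (a * (?H * (phi0 * v)) * r) * (u * v)"
      unfolding g_def q_def Fau by (simp add: algebra_simps)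
    also have "\<dots> = - (a * a * r)" by (simp only: uv a_alpha[symmetric] mult_1_right)
    finally show ?thesis using aL by simp
  qed
  have f2: "Fr ^ 2 = ?H * q"
  proof -
    have "Fr ^ 2 = Fr * Fr" by (simp add: power2_eq_square)
    also have "\<dots> = (?H * phi0) * Fr" by (subst (1) phi0) (rule refl)
    finally show ?thesis unfolding q_def by (simp add: ac_simps)
  qed
  have L: "toR (log_coeff f) = Fr * T" by (simp add: toR_log T_def Fr_def)
  let ?g = "\<lambda>(i,j). g $ i $ j" and ?q = "\<lambda>(i,j). q $ i $ j"
  have tg: "toR ?g = g" and tq: "toR ?q = q" by (rule toR_surj)+
  show ?thesis
  proof (intro exI conjI)
    show "ps_pow f 2 = ps_mul (ps_pow ps_h s) ?q"
      by (rule toR_inj) (simp add: toR_mul toR_pow toR_h tq f2[unfolded Fr_def])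
    have c1: "ps_sub (fst X) (ps_mul (log_coeff f) (fst vf_E)) = ps_mul (ps_mul ?g ?q) (fst vf_E)"
    proof (rule toR_inj)
      have "P - Fr * T * xR = (a - Fr * T) * xR" unfolding Pa by (simp add: algebra_simps)
      then show "toR (ps_sub (fst X) (ps_mul (log_coeff f) (fst vf_E))) = toR (ps_mul (ps_mul ?g ?q) (fst vf_E))"
        unfolding gq by (simp add: vf_E_def toR_sub toR_mul toR_X1 tg tq L flip: P_def)
    qed
    have c2: "ps_sub (snd X) (ps_mul (log_coeff f) (snd vf_E)) = ps_mul (ps_mul ?g ?q) (snd vf_E)"
    proof (rule toR_inj)
      have "Q - Fr * T * (cR (-1) * yR) = (a - Fr * T) * (cR (-1) * yR)" unfolding Qa cRm1 by (simp add: algebra_simps flip: fps_const_neg)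
      then show "toR (ps_sub (snd X) (ps_mul (log_coeff f) (snd vf_E))) = toR (ps_mul (ps_mul ?g ?q) (snd vf_E))"
        unfolding gq by (simp add: vf_E_def toR_sub toR_mul toR_X2 toR_scale tg tq L flip: Q_def)
    qed
    show "vf_sub X (vf_scale (log_coeff f) vf_E) = vf_scale (ps_mul ?g ?q) vf_E"
      unfolding vf_sub_def vf_scale_def using c1 c2 by simp
  qed
qed

end
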